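(* For the $m\times n$ grid-with-a-hole graph $G^\square_{m,n}$, the fraction of balanced $k$-partitions $Z_{\mu^{\mathrm{balanced}}_k}/Z_{\mu^*_k}$ is lower bounded by $\Omega\!\left(\frac{1}{(m+n)^k\Theta(1)^k}\right)$.
   Context: The $m\times n$ grid graph $G_{m,n}$ has vertices $(i,j)$, $i\in[m]$, $j\in[n]$, with edges between horizontally or vertically adjacent vertices. For $m,n\ge4$, $G^\square_{m,n}$ is $G_{m,n}$ with the vertices $\{(i,j):2\le i\le m-1,\,2\le j\le n-1\}$ removed. For a graph $G$ and $k$, the spanning tree distribution gives a partition $(P_1,\dots,P_k)$ of $V(G)$ the weight $\mu^*_k(P_1,\dots,P_k)=\prod_{i=1}^kT(P_i)$, where $T(P_i)$ is the number of spanning trees of $G[P_i]$; $Z_{\mu^*_k}$ is the total weight, and $Z_{\mu^{\mathrm{balanced}}_k}$ is the total weight of balanced partitions, i.e. those with $|P_1|=\dots=|P_k|$. *)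

theory Defs
  imports Complex_Main
begin

type_synonym vert = "nat \<times> nat"

definition grid_hole_V :: "nat \<Rightarrow> nat \<Rightarrow> vert set" where
  "grid_hole_V m n = {(i,j). 1 \<le> i \<and> i \<le> m \<and> 1 \<le> j \<and> j \<le> n \<and>
      \<not> (2 \<le> i \<and> i \<le> m - 1 \<and> 2 \<le> j \<and> j \<le> n - 1)}"

definition grid_adj :: "vert \<Rightarrow> vert \<Rightarrow> bool" where
  "grid_adj u v \<longleftrightarrow>
     (fst u = fst v \<and> (snd v = snd u + 1 \<or> snd u = snd v + 1)) \<or>
     (snd u = snd v \<and> (fst v = fst u + 1 \<or> fst u = fst v + 1))"

definition induced_edges :: "vert set \<Rightarrow> vert set set" where
  "induced_edges P = {{u, v} | u v. u \<in> P \<and> v \<in> P \<and> grid_adj u v}"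

definition edge_rel :: "vert set set \<Rightarrow> (vert \<times> vert) set" where
  "edge_rel F = {(x, y). {x, y} \<in> F}"

definition spanning_trees :: "vert set \<Rightarrow> vert set set set" where
  "spanning_trees P = {F. F \<subseteq> induced_edges P \<and>
      (\<forall>u\<in>P. \<forall>v\<in>P. (u, v) \<in> (edge_rel F)\<^sup>*) \<and> card F = card P - 1}"

definition num_spanning_trees :: "vert set \<Rightarrow> nat" where
  "num_spanning_trees P = card (spanning_trees P)"

text \<open>Ordered partitions (P_1,...,P_k) of V into k nonempty blocks, encoded as
  p :: nat => vert set with blocks p 0, ..., p (k-1) and p i = {} for i >= k.\<close>
definition partitions :: "vert set \<Rightarrow> nat \<Rightarrow> (nat \<Rightarrow> vert set) set" where
  "partitions V k = {p. (\<forall>i<k. p i \<noteq> {}) \<and> (\<forall>i. k \<le> i \<longrightarrow> p i = {}) \<and>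
      (\<forall>i<k. \<forall>j<k. i \<noteq> j \<longrightarrow> p i \<inter> p j = {}) \<and> (\<Union>i<k. p i) = V}"

definition balanced_partitions :: "vert set \<Rightarrow> nat \<Rightarrow> (nat \<Rightarrow> vert set) set" where
  "balanced_partitions V k = {p \<in> partitions V k. \<forall>i<k. \<forall>j<k. card (p i) = card (p j)}"

definition st_weight :: "nat \<Rightarrow> (nat \<Rightarrow> vert set) \<Rightarrow> real" where
  "st_weight k p = (\<Prod>i<k. real (num_spanning_trees (p i)))"

definition Z_star :: "vert set \<Rightarrow> nat \<Rightarrow> real" where
  "Z_star V k = (\<Sum>p\<in>partitions V k. st_weight k p)"

definition Z_balanced :: "vert set \<Rightarrow> nat \<Rightarrow> real" where
  "Z_balanced V k = (\<Sum>p\<in>balanced_partitions V k. st_weight k p)"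

end

theory Submission
  imports Defs "HOL-Library.FuncSet"
begin


definition phi :: "nat \<Rightarrow> nat \<Rightarrow> nat \<Rightarrow> vert" where
  "phi m n a = (if a < n - 1 then (1, a + 1)
     else if a < n + m - 2 then (a + 2 - n, n)
     else if a < 2*n + m - 3 then (m, 2*n + m - 2 - a)
     else (2*n + 2*m - 3 - a, 1))"

lemma phi_in:
  assumes "4 \<le> m" "4 \<le> n" "a < 2*m+2*n-4"
  shows "phi m n a \<in> grid_hole_V m n"
  using assms unfolding phi_def grid_hole_V_def by auto

definition psi :: "nat \<Rightarrow> nat \<Rightarrow> vert \<Rightarrow> nat" where
  "psi m n v = (if fst v = 1 \<and> snd v < n then snd v - 1
     else if snd v = n \<and> fst v < m then n + fst v - 2
     else if fst v = m \<and> 1 < snd v then 2*n + m - 2 - snd v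
     else 2*n + 2*m - 3 - fst v)"

lemma phi_cases:
  assumes "4 \<le> m" "4 \<le> n" "a < 2*m+2*n-4"
  obtains (c1) "a < n - 1" "phi m n a = (1, a + 1)"
   | (c2) "n - 1 \<le> a" "a < n + m - 2" "phi m n a = (a + 2 - n, n)"
   | (c3) "n + m - 2 \<le> a" "a < 2*n + m - 3" "phi m n a = (m, 2*n + m - 2 - a)"
   | (c4) "2*n + m - 3 \<le> a" "phi m n a = (2*n + 2*m - 3 - a, 1)"
proof (cases "a < n - 1")
  case True then show ?thesis using that(1) by (simp add: phi_def)
next
  case F1: False
  show ?thesis
  proof (cases "a < n + m - 2")
    case True then show ?thesis using that(2) F1 by (simp add: phi_def)
  next
    case F2: False
    show ?thesis
    proof (cases "a < 2*n + m - 3")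
      case True then show ?thesis using that(3) F1 F2 by (simp add: phi_def)
    next
      case F3: False
      then show ?thesis using that(4) F1 F2 by (simp add: phi_def)
    qed
  qed
qed

lemma psi_phi:
  assumes "4 \<le> m" "4 \<le> n" "a < 2*m+2*n-4"
  shows "psi m n (phi m n a) = a"
  using phi_cases[OF assms] by cases (use assms in \<open>auto simp: psi_def\<close>)

lemma phi_inj:
  assumes "4 \<le> m" "4 \<le> n"
  shows "inj_on (phi m n) {..<2*m+2*n-4}"
  by (rule inj_on_inverseI[where g="psi m n"]) (use psi_phi[OF assms] in auto)

lemma aux_case: "\<lbrakk>4 \<le> (m::nat); 4 \<le> (n::nat); 1 \<le> (i::nat); i \<le> m; 1 \<le> (j::nat); j \<le> n;
  \<not> (2 \<le> i \<and> i \<le> m - 1 \<and> 2 \<le> j \<and> j \<le> n - 1); \<not>(i = 1 \<and> j < n); \<not>(j = n \<and> i < m);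
  \<not> (i = m \<and> 1 < j)\<rbrakk> \<Longrightarrow> j = 1 \<and> 1 < i"
  by (cases "j = 1"; cases "j = n"; cases "i = 1"; cases "i = m"; simp; linarith)

lemma phi_surj:
  assumes "4 \<le> m" "4 \<le> n" "v \<in> grid_hole_V m n"
  shows "\<exists>a < 2*m+2*n-4. phi m n a = v"
proof -
  obtain i j where v: "v = (i,j)" by force
  have h: "1 \<le> i" "i \<le> m" "1 \<le> j" "j \<le> n" "\<not> (2 \<le> i \<and> i \<le> m - 1 \<and> 2 \<le> j \<and> j \<le> n - 1)"
    using assms(3) unfolding v grid_hole_V_def by auto
  show ?thesis
  proof (cases "i = 1 \<and> j < n")
    case True
    then show ?thesis using assms h by (intro exI[of _ "j - 1"]) (auto simp: phi_def v)
  next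
    case F1: False
    show ?thesis
    proof (cases "j = n \<and> i < m")
      case True
      then show ?thesis using assms h F1 by (intro exI[of _ "n + i - 2"]) (auto simp: phi_def v)
    next
      case F2: False
      show ?thesis
      proof (cases "i = m \<and> 1 < j")
        case True
        then show ?thesis using assms h F1 F2 by (intro exI[of _ "2*n + m - 2 - j"]) (auto simp: phi_def v)
      next
        case F3: False
        have "j = 1 \<and> 1 < i" using aux_case[OF assms(1,2) h F1 F2 F3] .
        then have "j = 1" "1 < i" by auto
        define a where "a = 2*n + 2*m - 3 - i"
        have a1: "\<not> a < n - 1" "\<not> a < n + m - 2" "\<not> a < 2*n + m - 3" "a < 2*m+2*n-4"
          "2*n + 2*m - 3 - a = i"
          using \<open>1 < i\<close> h assms unfolding a_def by linarith+
        have "phi m n a = v" unfolding phi_def v using a1 \<open>j = 1\<close> by simp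
        then show ?thesis using a1 by blast
      qed
    qed
  qed
qed



definition sc :: "nat \<Rightarrow> nat \<Rightarrow> vert \<Rightarrow> vert" where
  "sc m n v = (if fst v = 1 \<and> snd v < n then (1, snd v + 1)
     else if snd v = n \<and> fst v < m then (fst v + 1, n)
     else if fst v = m \<and> 1 < snd v then (m, snd v - 1)
     else (fst v - 1, 1))"

lemma sc_in:
  assumes "4 \<le> m" "4 \<le> n" "v \<in> grid_hole_V m n"
  shows "sc m n v \<in> grid_hole_V m n"
  using assms unfolding grid_hole_V_def sc_def by (cases v) auto

lemma sc_adj:
  assumes "4 \<le> m" "4 \<le> n" "v \<in> grid_hole_V m n"
  shows "grid_adj v (sc m n v)"
  using assms unfolding grid_hole_V_def sc_def grid_adj_def by (cases v) auto

lemma adj_sc_h: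
  assumes "4 \<le> m" "4 \<le> n" "(i,j) \<in> grid_hole_V m n" "(i,j+1) \<in> grid_hole_V m n"
  shows "(i,j+1) = sc m n (i,j) \<or> (i,j) = sc m n (i,j+1)"
proof -
  have h: "1 \<le> i" "i \<le> m" "1 \<le> j" "j + 1 \<le> n" "\<not> (2 \<le> i \<and> i \<le> m - 1 \<and> 2 \<le> j \<and> j \<le> n - 1)"
     "\<not> (2 \<le> i \<and> i \<le> m - 1 \<and> 2 \<le> j + 1 \<and> j + 1 \<le> n - 1)"
    using assms(3,4) unfolding grid_hole_V_def by auto
  show ?thesis
  proof (cases "i = 1")
    case True
    then have "sc m n (i,j) = (i,j+1)" using h unfolding sc_def by simp
    then show ?thesis by simp
  next
    case F: False
    show ?thesis
    proof (cases "i = m")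
      case True
      then have "sc m n (i,j+1) = (i,j)" using h F assms(1) unfolding sc_def by simp
      then show ?thesis by simp
    next
      case False
      then have False using h F assms(1,2) by linarith
      then show ?thesis ..
    qed
  qed
qed

lemma adj_sc_v:
  assumes "4 \<le> m" "4 \<le> n" "(i,j) \<in> grid_hole_V m n" "(i+1,j) \<in> grid_hole_V m n"
  shows "(i+1,j) = sc m n (i,j) \<or> (i,j) = sc m n (i+1,j)"
proof -
  have h: "1 \<le> i" "i + 1 \<le> m" "1 \<le> j" "j \<le> n" "\<not> (2 \<le> i \<and> i \<le> m - 1 \<and> 2 \<le> j \<and> j \<le> n - 1)"
     "\<not> (2 \<le> i + 1 \<and> i + 1 \<le> m - 1 \<and> 2 \<le> j \<and> j \<le> n - 1)"
    using assms(3,4) unfolding grid_hole_V_def by auto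
  show ?thesis
  proof (cases "j = n")
    case True
    then have "sc m n (i,j) = (i+1,j)" using h assms(2) unfolding sc_def by simp
    then show ?thesis by simp
  next
    case F: False
    show ?thesis
    proof (cases "j = 1")
      case True
      then have "sc m n (i+1,j) = (i,j)" using h F assms(1,2) unfolding sc_def by simp
      then show ?thesis by simp
    next
      case False
      then have False using h F assms(1,2) by linarith
      then show ?thesis ..
    qed
  qed
qed

lemma adj_sc:
  assumes "4 \<le> m" "4 \<le> n" "u \<in> grid_hole_V m n" "v \<in> grid_hole_V m n" "grid_adj u v"
  shows "v = sc m n u \<or> u = sc m n v"
proof -
  obtain i j where u: "u = (i,j)" by force
  obtain i' j' where v: "v = (i',j')" by force
  have "(i' = i \<and> j' = j + 1) \<or> (i = i' \<and> j = j' + 1) \<or> (j' = j \<and> i' = i + 1) \<or> (j = j' \<and> i = i' + 1)"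
    using assms(5) unfolding u v grid_adj_def by auto
  then show ?thesis
  proof (elim disjE conjE)
    assume "i' = i" "j' = j + 1" then show ?thesis using adj_sc_h[OF assms(1,2)] assms(3,4) u v by blast
  next
    assume "i = i'" "j = j' + 1" then show ?thesis using adj_sc_h[OF assms(1,2)] assms(3,4) u v by blast
  next
    assume "j' = j" "i' = i + 1" then show ?thesis using adj_sc_v[OF assms(1,2)] assms(3,4) u v by blast
  next
    assume "j = j'" "i = i' + 1" then show ?thesis using adj_sc_v[OF assms(1,2)] assms(3,4) u v by blast
  qed
qed

lemma sc_phi:
  assumes "4 \<le> m" "4 \<le> n" "a < 2*m+2*n-4"
  shows "sc m n (phi m n a) = phi m n ((a + 1) mod (2*m+2*n-4))"
proof -
  have md: "(a + 1) mod (2*m+2*n-4) = (if a + 1 = 2*m+2*n-4 then 0 else a + 1)"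
    using assms by auto
  show ?thesis unfolding md
    by (rule phi_cases[OF assms]) (use assms in \<open>auto simp: sc_def phi_def\<close>)
qed



locale gh =
  fixes m n :: nat
  assumes m4: "4 \<le> m" and n4: "4 \<le> n"
begin

abbreviation "V \<equiv> grid_hole_V m n"
abbreviation "N \<equiv> 2*m+2*n-4"
abbreviation "s \<equiv> sc m n"
abbreviation "ph \<equiv> phi m n"

definition ends :: "vert set \<Rightarrow> vert set" where
  "ends P = {x\<in>P. s x \<notin> P}"

lemma N_ge: "12 \<le> N" using m4 n4 by linarith

lemma V_eq: "V = ph ` {..<N}"
proof
  show "V \<subseteq> ph ` {..<N}" using phi_surj[OF m4 n4] by blast
  show "ph ` {..<N} \<subseteq> V" using phi_in[OF m4 n4] by blast
qed

lemma finV: "finite V" unfolding V_eq by simp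

lemma cardV: "card V = N"
  unfolding V_eq using card_image[OF phi_inj[OF m4 n4]] by simp

lemma s_in: "x \<in> V \<Longrightarrow> s x \<in> V" using sc_in[OF m4 n4] by blast

lemma iter: "a < N \<Longrightarrow> (s ^^ t) (ph a) = ph ((a + t) mod N)"
proof (induction t)
  case 0
  then show ?case by simp
next
  case (Suc t)
  have "(s ^^ Suc t) (ph a) = s (ph ((a + t) mod N))" using Suc by simp
  also have "\<dots> = ph (((a + t) mod N + 1) mod N)"
    using sc_phi[OF m4 n4] N_ge by simp
  also have "((a + t) mod N + 1) mod N = (a + Suc t) mod N"
    by (simp add: mod_Suc_eq)
  finally show ?case .
qed

lemma orbit: "x \<in> V \<Longrightarrow> y \<in> V \<Longrightarrow> \<exists>t. (s ^^ t) x = y"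
proof -
  assume "x \<in> V" "y \<in> V"
  then obtain a b where ab: "a < N" "b < N" "x = ph a" "y = ph b" unfolding V_eq by blast
  have "(s ^^ (b + N - a)) x = ph ((a + (b + N - a)) mod N)" using iter ab by simp
  also have "a + (b + N - a) = b + N" using ab by simp
  also have "(b + N) mod N = b" by (subst mod_add_self2) (simp add: ab)
  finally show ?thesis using ab by blast
qed

lemma finite_E: "finite P \<Longrightarrow> finite (induced_edges P)"
proof -
  assume "finite P"
  have "induced_edges P \<subseteq> (\<lambda>(u,v). {u,v}) ` (P \<times> P)"
    unfolding induced_edges_def by auto
  then show ?thesis using \<open>finite P\<close> finite_subset by blast
qed

lemma E_sub: "P \<subseteq> V \<Longrightarrow> induced_edges P \<subseteq> (\<lambda>x. {x, s x}) ` {x\<in>P. s x \<in> P}"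
proof
  fix e assume P: "P \<subseteq> V" and "e \<in> induced_edges P"
  then obtain u v where e: "e = {u,v}" "u \<in> P" "v \<in> P" "grid_adj u v"
    unfolding induced_edges_def by blast
  then have "v = s u \<or> u = s v" using adj_sc[OF m4 n4] P by blast
  then show "e \<in> (\<lambda>x. {x, s x}) ` {x\<in>P. s x \<in> P}"
  proof
    assume "v = s u" then show ?thesis using e by blast
  next
    assume "u = s v" then have "e = {v, s v}" using e by blast
    then show ?thesis using e \<open>u = s v\<close> by blast
  qed
qed

lemma card_E: "P \<subseteq> V \<Longrightarrow> card (induced_edges P) \<le> card P - card (ends P)"
proof -
  assume P: "P \<subseteq> V"
  then have fP: "finite P" using finV finite_subset by blast
  have "card (induced_edges P) \<le> card ((\<lambda>x. {x, s x}) ` {x\<in>P. s x \<in> P})"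
    by (rule card_mono) (use fP E_sub[OF P] in auto)
  also have "\<dots> \<le> card {x\<in>P. s x \<in> P}" by (rule card_image_le) (use fP in auto)
  also have "{x\<in>P. s x \<in> P} = P - ends P" unfolding ends_def by auto
  also have "card (P - ends P) = card P - card (ends P)"
    by (rule card_Diff_subset) (use fP finite_subset in \<open>auto simp: ends_def\<close>)
  finally show ?thesis .
qed

lemma ends_ne:
  assumes P: "P \<subseteq> V" "P \<noteq> {}" "P \<noteq> V"
  shows "ends P \<noteq> {}"
proof
  assume emp: "ends P = {}"
  obtain x where x: "x \<in> P" using P by blast
  obtain y where y: "y \<in> V" "y \<notin> P" using P by blast
  obtain t where t: "(s ^^ t) x = y" using orbit[OF _ y(1)] x P by blast
  have cl: "z \<in> P \<Longrightarrow> s z \<in> P" for z using emp unfolding ends_def by blast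
  have "(s ^^ t') x \<in> P" for t'
    by (induction t') (use x cl in auto)
  then show False using t y by metis
qed

lemma T_le:
  assumes P: "P \<subseteq> V" "P \<noteq> {}" "P \<noteq> V"
  shows "num_spanning_trees P \<le> 1 \<and> (0 < num_spanning_trees P \<longrightarrow> card (ends P) = 1)"
proof -
  have fP: "finite P" using P finV finite_subset by blast
  have fE: "finite (ends P)" using fP unfolding ends_def by simp
  have e1: "1 \<le> card (ends P)" using ends_ne[OF P] fE by (simp add: Suc_le_eq card_gt_0_iff)
  have eP: "card (ends P) \<le> card P" by (rule card_mono[OF fP]) (auto simp: ends_def)
  have cE: "card (induced_edges P) \<le> card P - card (ends P)" using card_E[OF P(1)] .
  have sub: "spanning_trees P \<subseteq> {induced_edges P}"
  proof
    fix F assume "F \<in> spanning_trees P"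
    then have F: "F \<subseteq> induced_edges P" "card F = card P - 1" unfolding spanning_trees_def by auto
    have "F = induced_edges P"
      by (rule card_seteq[OF finite_E[OF fP] F(1)]) (use F(2) cE e1 in linarith)
    then show "F \<in> {induced_edges P}" by simp
  qed
  have le1: "num_spanning_trees P \<le> 1"
    unfolding num_spanning_trees_def using card_mono[OF _ sub] by simp
  moreover have "card (ends P) = 1" if pos: "0 < num_spanning_trees P"
  proof -
    obtain F where "F \<in> spanning_trees P"
      using pos unfolding num_spanning_trees_def by (metis card.empty ex_in_conv less_irrefl)
    then have F: "F \<subseteq> induced_edges P" "card F = card P - 1" unfolding spanning_trees_def by auto
    have "card F \<le> card (induced_edges P)" by (rule card_mono[OF finite_E[OF fP] F(1)])
    moreover have "1 \<le> card P" using fP P(2) by (simp add: Suc_le_eq card_gt_0_iff)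
    ultimately show ?thesis using F(2) cE e1 eP by linarith
  qed
  ultimately show ?thesis by blast
qed


lemma ph_inj: "x < N \<Longrightarrow> y < N \<Longrightarrow> ph x = ph y \<Longrightarrow> x = y"
  using phi_inj[OF m4 n4] unfolding inj_on_def by blast

lemma ph_Suc: "c + 1 < N \<Longrightarrow> ph (c + 1) = s (ph c)"
  using sc_phi[OF m4 n4, of c] by simp

lemma ph_in: "c < N \<Longrightarrow> ph c \<in> V" using phi_in[OF m4 n4] by blast

lemma arc_T:
  assumes ab: "a < b" "b \<le> N"
  shows "1 \<le> num_spanning_trees (ph ` {a..<b})"
proof -
  define P where "P = ph ` {a..<b}"
  define F where "F = (\<lambda>c. {ph c, ph (c + 1)}) ` {a..<b-1}"
  have injP: "inj_on ph {a..<b}" by (rule inj_onI) (use ph_inj ab in auto)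
  have cP: "card P = b - a" unfolding P_def using card_image[OF injP] by simp
  have fP: "finite P" unfolding P_def by simp
  have adj: "grid_adj (ph c) (ph (c + 1))" if "c + 1 < N" for c
    using sc_adj[OF m4 n4 ph_in[of c]] ph_Suc[OF that] that by simp
  have FE: "F \<subseteq> induced_edges P"
  proof
    fix e assume "e \<in> F"
    then obtain c where c: "c \<in> {a..<b-1}" "e = {ph c, ph (c+1)}" unfolding F_def by blast
    have "ph c \<in> P" "ph (c+1) \<in> P" using c unfolding P_def by auto
    moreover have "c + 1 < N" using c ab by auto
    then have "grid_adj (ph c) (ph (c + 1))" using adj by blast
    ultimately show "e \<in> induced_edges P" unfolding induced_edges_def c(2) by blast
  qed
  have injF: "inj_on (\<lambda>c. {ph c, ph (c + 1)}) {a..<b-1}"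
  proof (rule inj_onI)
    fix c d assume c: "c \<in> {a..<b-1}" and d: "d \<in> {a..<b-1}" and eq: "{ph c, ph (c + 1)} = {ph d, ph (d + 1)}"
    have lt: "c < N" "c + 1 < N" "d < N" "d + 1 < N" using c d ab by auto
    from eq have "(ph c = ph d \<and> ph (c+1) = ph (d+1)) \<or> (ph c = ph (d+1) \<and> ph (c+1) = ph d)"
      by (simp add: doubleton_eq_iff)
    then show "c = d"
    proof
      assume "ph c = ph d \<and> ph (c+1) = ph (d+1)" then show ?thesis using ph_inj lt by blast
    next
      assume h: "ph c = ph (d+1) \<and> ph (c+1) = ph d"
      then have "c = d + 1" "c + 1 = d" using ph_inj lt by blast+
      then show ?thesis by simp
    qed
  qed
  have cF: "card F = card P - 1" unfolding F_def using card_image[OF injF] cP by simp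
  have R1: "(ph c, ph (c+1)) \<in> edge_rel F" "(ph (c+1), ph c) \<in> edge_rel F" if "a \<le> c" "c + 1 < b" for c
  proof -
    have "{ph c, ph (c+1)} \<in> F" unfolding F_def using that by auto
    then show "(ph c, ph (c+1)) \<in> edge_rel F" "(ph (c+1), ph c) \<in> edge_rel F"
      unfolding edge_rel_def by (auto simp: insert_commute)
  qed
  have R2: "d < b \<longrightarrow> (ph c, ph d) \<in> (edge_rel F)\<^sup>* \<and> (ph d, ph c) \<in> (edge_rel F)\<^sup>*"
    if "a \<le> c" "c \<le> d" for c d
    using that(2)
  proof (induction d rule: dec_induct)
    case base then show ?case by simp
  next
    case (step d)
    show ?case
    proof
      assume "Suc d < b"
      then have "(ph c, ph d) \<in> (edge_rel F)\<^sup>*" "(ph d, ph c) \<in> (edge_rel F)\<^sup>*" using step by auto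
      moreover have "(ph d, ph (d+1)) \<in> edge_rel F" "(ph (d+1), ph d) \<in> edge_rel F"
        using R1[of d] step that \<open>Suc d < b\<close> by auto
      ultimately show "(ph c, ph (Suc d)) \<in> (edge_rel F)\<^sup>* \<and> (ph (Suc d), ph c) \<in> (edge_rel F)\<^sup>*"
        by (metis Suc_eq_plus1 converse_rtrancl_into_rtrancl rtrancl_into_rtrancl)
    qed
  qed
  have conn: "\<forall>u\<in>P. \<forall>v\<in>P. (u, v) \<in> (edge_rel F)\<^sup>*"
  proof (intro ballI)
    fix u v assume "u \<in> P" "v \<in> P"
    then obtain c d where cd: "c \<in> {a..<b}" "d \<in> {a..<b}" "u = ph c" "v = ph d" unfolding P_def by blast
    show "(u, v) \<in> (edge_rel F)\<^sup>*"
    proof (cases "c \<le> d")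
      case True then show ?thesis using R2[of c d] cd by auto
    next
      case False then show ?thesis using R2[of d c] cd by auto
    qed
  qed
  have "F \<in> spanning_trees P" unfolding spanning_trees_def using FE cF conn by blast
  moreover have "finite (spanning_trees P)"
    by (rule finite_subset[of _ "Pow (induced_edges P)"]) (use finite_E[OF fP] in \<open>auto simp: spanning_trees_def\<close>)
  ultimately have "0 < card (spanning_trees P)" using card_gt_0_iff by blast
  then show ?thesis unfolding num_spanning_trees_def P_def by simp
qed

lemma fin_parts: "finite (partitions V k)"
proof -
  have inj: "inj_on (\<lambda>p. restrict p {..<k}) (partitions V k)"
  proof (rule inj_onI)
    fix p q assume p: "p \<in> partitions V k" and q: "q \<in> partitions V k"
      and eq: "restrict p {..<k} = restrict q {..<k}"
    show "p = q"
    proof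
      fix i show "p i = q i"
      proof (cases "i < k")
        case True then show ?thesis using fun_cong[OF eq, of i] by simp
      next
        case False then show ?thesis using p q unfolding partitions_def by auto
      qed
    qed
  qed
  have "(\<lambda>p. restrict p {..<k}) ` partitions V k \<subseteq> PiE {..<k} (\<lambda>_. Pow V)"
    unfolding partitions_def by auto
  moreover have "finite (PiE {..<k} (\<lambda>_. Pow V))" by (rule finite_PiE) (use finV in auto)
  ultimately show ?thesis using finite_imageD[OF _ inj] finite_subset by blast
qed

lemma weight_nonneg: "0 \<le> st_weight k p"
  unfolding st_weight_def by (rule prod_nonneg) simp

lemma Zbal_ge1:
  assumes k: "1 \<le> k" "k dvd N"
  shows "1 \<le> Z_balanced V k"
proof -
  define L where "L = N div k"
  have LK: "L * k = N" unfolding L_def using k by simp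
  have L1: "1 \<le> L" using LK N_ge by (metis One_nat_def Suc_leI mult_is_0 neq0_conv not_numeral_le_zero)
  define p where "p i = (if i < k then ph ` {i*L..<(i+1)*L} else {})" for i
  have bnd: "(i+1)*L \<le> N" if "i < k" for i
  proof -
    have "(i+1)*L \<le> k * L" using that by (intro mult_right_mono) auto
    then show ?thesis using LK by (simp add: mult.commute)
  qed
  have divI: "x div L = i" if "x \<in> {i*L..<(i+1)*L}" for x i
    using that L1 by (intro div_nat_eqI) (auto simp: mult.commute)
  have pp: "p \<in> partitions V k"
    unfolding partitions_def
  proof (intro CollectI conjI allI impI)
    fix i assume i: "i < k"
    have "ph (i*L) \<in> p i" unfolding p_def using i L1 by auto
    then show "p i \<noteq> {}" by blast
  next
    fix i assume "k \<le> i" then show "p i = {}" unfolding p_def by simp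
  next
    fix i j assume i: "i < k" and j: "j < k" and ij: "i \<noteq> j"
    show "p i \<inter> p j = {}"
    proof (rule ccontr)
      assume "p i \<inter> p j \<noteq> {}"
      then obtain z where "z \<in> p i" "z \<in> p j" by blast
      then have zi: "z \<in> ph ` {i*L..<(i+1)*L}" and zj: "z \<in> ph ` {j*L..<(j+1)*L}"
        unfolding p_def using i j by auto
      obtain x where x: "x \<in> {i*L..<(i+1)*L}" "z = ph x" using zi by blast
      obtain y where y: "y \<in> {j*L..<(j+1)*L}" "z = ph y" using zj by blast
      have "ph x = ph y" using x y by simp
      then have "x = y" using ph_inj bnd[OF i] bnd[OF j] x(1) y(1) by auto
      then show False using divI[OF x(1)] divI[OF y(1)] ij by simp
    qed
  next
    show "(\<Union>i<k. p i) = V"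
    proof
      show "(\<Union>i<k. p i) \<subseteq> V" unfolding p_def using bnd ph_in by fastforce
      show "V \<subseteq> (\<Union>i<k. p i)"
      proof
        fix v assume "v \<in> V"
        then obtain x where x: "x < N" "v = ph x" unfolding V_eq by blast
        define i where "i = x div L"
        have "i < k" unfolding i_def using x LK L1 by (simp add: div_less_iff_less_mult mult.commute)
        moreover have "x \<in> {i*L..<(i+1)*L}" unfolding i_def using L1
          by (auto simp: mult.commute dividend_less_times_div)
        ultimately have "v \<in> p i" "i < k" unfolding p_def using x by auto
        then show "v \<in> (\<Union>i<k. p i)" by blast
      qed
    qed
  qed
  have cardp: "card (p i) = L" if "i < k" for i
  proof -
    have "inj_on ph {i*L..<(i+1)*L}" by (rule inj_onI) (use ph_inj bnd[OF that] in auto)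
    then show ?thesis unfolding p_def using that card_image by fastforce
  qed
  have pb: "p \<in> balanced_partitions V k" unfolding balanced_partitions_def using pp cardp by simp
  have "1 \<le> st_weight k p"
    unfolding st_weight_def
  proof (rule prod_ge_1)
    fix i assume "i \<in> {..<k}"
    then have i: "i < k" by simp
    have "i*L < (i+1)*L" using L1 by simp
    then have "1 \<le> num_spanning_trees (p i)" unfolding p_def using i arc_T bnd[OF i] by simp
    then show "1 \<le> real (num_spanning_trees (p i))" by simp
  qed
  also have "st_weight k p \<le> Z_balanced V k"
    unfolding Z_balanced_def
  proof (rule member_le_sum[OF pb])
    show "finite (balanced_partitions V k)"
      by (rule finite_subset[OF _ fin_parts[of k]]) (auto simp: balanced_partitions_def)
  qed (rule weight_nonneg)
  finally show ?thesis .
qed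

lemma disj: "p \<in> partitions V k \<Longrightarrow> i < k \<Longrightarrow> j < k \<Longrightarrow> i \<noteq> j \<Longrightarrow> p i \<inter> p j = {}"
  unfolding partitions_def by blast

definition good :: "nat \<Rightarrow> (nat \<Rightarrow> vert set) set" where
  "good k = {p \<in> partitions V k. \<forall>i<k. 0 < num_spanning_trees (p i)}"

lemma part_block:
  assumes p: "p \<in> partitions V k" and k: "2 \<le> k" and i: "i < k"
  shows "p i \<subseteq> V" "p i \<noteq> {}" "p i \<noteq> V"
proof -
  show sub: "p i \<subseteq> V" using p i unfolding partitions_def by blast
  show ne: "p i \<noteq> {}" using p i unfolding partitions_def by blast
  define j :: nat where "j = (if i = 0 then 1 else 0)"
  have j: "j < k" "j \<noteq> i" unfolding j_def using k by auto
  have "p j \<noteq> {}" "p j \<subseteq> V" "p i \<inter> p j = {}" using p i j unfolding partitions_def by blast+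
  then show "p i \<noteq> V" by blast
qed

definition e :: "(nat \<Rightarrow> vert set) \<Rightarrow> nat \<Rightarrow> vert" where
  "e p i = the_elem (ends (p i))"

lemma ends_single:
  assumes p: "p \<in> good k" and k: "2 \<le> k" and i: "i < k"
  shows "ends (p i) = {e p i}"
proof -
  have pp: "p \<in> partitions V k" using p unfolding good_def by blast
  have pos: "0 < num_spanning_trees (p i)" using p i unfolding good_def by blast
  have "card (ends (p i)) = 1"
    using mp[OF conjunct2[OF T_le[OF part_block[OF pp k i]]] pos] .
  then have "\<exists>x. ends (p i) = {x}" by (metis One_nat_def card_1_singleton_iff)
  then obtain x where "ends (p i) = {x}" by blast
  then show ?thesis unfolding e_def by simp
qed

definition first :: "vert set \<Rightarrow> vert \<Rightarrow> vert" where
  "first E v = (s ^^ (LEAST t. (s ^^ t) v \<in> E)) v"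

lemma K:
  assumes p: "p \<in> good k" and k: "2 \<le> k" and i: "i < k" and v: "v \<in> p i"
  shows "first (e p ` {..<k}) v = e p i"
proof -
  have pp: "p \<in> partitions V k" using p unfolding good_def by blast
  note blk = part_block[OF pp k i]
  define P where "P = p i"
  obtain w where w: "w \<in> V" "w \<notin> P" using blk unfolding P_def by blast
  obtain t0 where t0: "(s ^^ t0) v = w" using orbit[OF _ w(1)] v blk unfolding P_def by blast
  have "t0 \<noteq> 0"
  proof
    assume "t0 = 0"
    then have "w = v" using t0 by simp
    then show False using w v unfolding P_def by simp
  qed
  then obtain t1 where t1: "t0 = Suc t1" using not0_implies_Suc by blast
  define S where "S = (LEAST t. (s ^^ Suc t) v \<notin> P)"
  have S1: "(s ^^ Suc S) v \<notin> P" unfolding S_def by (rule LeastI[of _ t1]) (use t0 t1 w in simp)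
  have S2: "(s ^^ Suc r) v \<in> P" if "r < S" for r
    using not_less_Least[of r "\<lambda>t. (s ^^ Suc t) v \<notin> P"] that unfolding S_def by blast
  have S3: "(s ^^ r) v \<in> P" if "r \<le> S" for r
  proof (cases r)
    case 0 then show ?thesis using v unfolding P_def by simp
  next
    case (Suc r') then show ?thesis using S2[of r'] that by simp
  qed
  have "(s ^^ S) v \<in> ends P" unfolding ends_def using S3[of S] S1 by simp
  then have eS: "(s ^^ S) v = e p i" using ends_single[OF p k i] unfolding P_def by blast
  have eP: "e p j \<in> p j" if "j < k" for j
    using ends_single[OF p k that] unfolding ends_def by blast
  have notE: "(s ^^ r) v \<notin> e p ` {..<k}" if r: "r < S" for r
  proof
    assume "(s ^^ r) v \<in> e p ` {..<k}"
    then obtain j where j: "j < k" "(s ^^ r) v = e p j" by blast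
    have inP: "(s ^^ r) v \<in> P" using S3[of r] r by simp
    show False
    proof (cases "j = i")
      case True
      then have "(s ^^ r) v \<in> ends P" using j ends_single[OF p k i] unfolding P_def by simp
      then have "s ((s ^^ r) v) \<notin> P" unfolding ends_def by simp
      then show False using S2[OF r] by simp
    next
      case False
      have "p j \<inter> p i = {}" using disj[OF pp j(1) i False] .
      moreover have "e p j \<in> p i" using inP j(2) unfolding P_def by simp
      ultimately show False using eP[OF j(1)] by blast
    qed
  qed
  have "(LEAST t. (s ^^ t) v \<in> e p ` {..<k}) = S"
  proof (rule Least_equality)
    show "(s ^^ S) v \<in> e p ` {..<k}" using eS i by simp
    fix y assume "(s ^^ y) v \<in> e p ` {..<k}"
    then show "S \<le> y" using notE not_le by blast
  qed
  then show ?thesis unfolding first_def using eS by simp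
qed

lemma block_char:
  assumes p: "p \<in> good k" and k: "2 \<le> k" and i: "i < k"
  shows "p i = {v \<in> V. first (e p ` {..<k}) v = e p i}"
proof -
  have pp: "p \<in> partitions V k" using p unfolding good_def by blast
  have eP: "e p j \<in> p j" if "j < k" for j
    using ends_single[OF p k that] unfolding ends_def by blast
  show ?thesis
  proof
    show "p i \<subseteq> {v \<in> V. first (e p ` {..<k}) v = e p i}"
      using K[OF p k i] part_block[OF pp k i] by blast
    show "{v \<in> V. first (e p ` {..<k}) v = e p i} \<subseteq> p i"
    proof
      fix v assume v: "v \<in> {v \<in> V. first (e p ` {..<k}) v = e p i}"
      then obtain j where j: "j < k" "v \<in> p j" using pp unfolding partitions_def by blast
      have "e p j = e p i" using K[OF p k j(1) j(2)] v by simp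
      then have "j = i"
      proof (rule contrapos_pp)
        assume "j \<noteq> i"
        then have dis: "p i \<inter> p j = {}" using disj[OF pp i j(1)] by blast
        show "e p j \<noteq> e p i"
        proof
          assume "e p j = e p i"
          then have "e p i \<in> p i \<inter> p j" using eP[OF i] eP[OF j(1)] by simp
          then show False using dis by blast
        qed
      qed
      then show "v \<in> p i" using j by simp
    qed
  qed
qed

lemma card_good:
  assumes k: "2 \<le> k"
  shows "card (good k) \<le> N ^ k"
proof -
  define f where "f p = restrict (e p) {..<k}" for p
  have inj: "inj_on f (good k)"
  proof (rule inj_onI)
    fix p q assume p: "p \<in> good k" and q: "q \<in> good k" and eq: "f p = f q"
    have ee: "e p i = e q i" if "i < k" for i using fun_cong[OF eq, of i] that unfolding f_def by simp
    then have img: "e p ` {..<k} = e q ` {..<k}" by (auto intro!: image_cong)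
    show "p = q"
    proof
      fix i show "p i = q i"
      proof (cases "i < k")
        case True
        then show ?thesis using block_char[OF p k True] block_char[OF q k True] img ee[OF True] by simp
      next
        case False then show ?thesis using p q unfolding good_def partitions_def by auto
      qed
    qed
  qed
  have img: "f ` good k \<subseteq> PiE {..<k} (\<lambda>_. V)"
  proof
    fix g assume "g \<in> f ` good k"
    then obtain p where p: "p \<in> good k" "g = f p" by blast
    have "e p i \<in> V" if "i < k" for i
      using ends_single[OF p(1) k that] part_block[OF _ k that, of p] p(1)
      unfolding ends_def good_def by blast
    then show "g \<in> PiE {..<k} (\<lambda>_. V)" unfolding p(2) f_def by auto
  qed
  have "card (good k) \<le> card (PiE {..<k} (\<lambda>_. V))"
    by (rule card_inj_on_le[OF inj img]) (rule finite_PiE, auto simp: finV)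
  also have "\<dots> = N ^ k" by (simp add: card_PiE cardV)
  finally show ?thesis .
qed

lemma Zstar_le:
  assumes k: "2 \<le> k"
  shows "Z_star V k \<le> real N ^ k"
proof -
  have w: "st_weight k p \<le> (if p \<in> good k then 1 else 0)" if p: "p \<in> partitions V k" for p
  proof (cases "p \<in> good k")
    case True
    have "st_weight k p \<le> 1" unfolding st_weight_def
    proof (rule prod_le_1)
      fix i assume "i \<in> {..<k}"
      then have "num_spanning_trees (p i) \<le> 1" using T_le[OF part_block[OF p k]] by simp
      then show "0 \<le> real (num_spanning_trees (p i)) \<and> real (num_spanning_trees (p i)) \<le> 1" by simp
    qed
    then show ?thesis using True by simp
  next
    case False
    then obtain i where "i < k" "num_spanning_trees (p i) = 0" using p unfolding good_def by auto
    then have "st_weight k p = 0" unfolding st_weight_def by (intro prod_zero) auto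
    then show ?thesis by simp
  qed
  have "Z_star V k \<le> (\<Sum>p\<in>partitions V k. (if p \<in> good k then 1 else 0))"
    unfolding Z_star_def by (rule sum_mono) (rule w)
  also have "\<dots> = (\<Sum>p\<in>partitions V k \<inter> good k. 1)"
    by (rule sum.inter_restrict[symmetric]) (rule fin_parts)
  also have "partitions V k \<inter> good k = good k" unfolding good_def by blast
  also have "(\<Sum>p\<in>good k. (1::real)) = real (card (good k))" by simp
  also have "\<dots> \<le> real (N ^ k)" using card_good[OF k] by linarith
  finally show ?thesis by simp
qed
end

lemma main_bound:
  assumes m: "4 \<le> m" and n: "4 \<le> n" and k: "1 \<le> k" and kd: "k dvd card (grid_hole_V m n)"
  shows "1 / (real (m + n) ^ k * 2 ^ k) \<le> Z_balanced (grid_hole_V m n) k / Z_star (grid_hole_V m n) k"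
proof -
  interpret gh m n using m n by unfold_locales
  have kN: "k dvd N" using kd cardV by simp
  have b1: "1 \<le> Z_balanced V k" by (rule Zbal_ge1) (use k kN in auto)
  have bs: "Z_balanced V k \<le> Z_star V k"
    unfolding Z_balanced_def Z_star_def
    by (rule sum_mono2[OF fin_parts]) (auto simp: balanced_partitions_def weight_nonneg)
  have pos: "0 < real (m + n) ^ k * 2 ^ k" using m by simp
  show ?thesis
  proof (cases "k = 1")
    case True
    then have "balanced_partitions V k = partitions V k" unfolding balanced_partitions_def by auto
    then have "Z_balanced V k = Z_star V k" unfolding Z_balanced_def Z_star_def by simp
    then have eq1: "Z_balanced V k / Z_star V k = 1" using b1 by simp
    have "1 \<le> real (m + n) ^ k * 2 ^ k" using True m by simp
    then have "1 / (real (m + n) ^ k * 2 ^ k) \<le> 1" using pos by simp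
    then show ?thesis using eq1 by simp
  next
    case False
    then have k2: "2 \<le> k" using k by simp
    have zs: "Z_star V k \<le> real N ^ k" by (rule Zstar_le[OF k2])
    have "real N \<le> 2 * real (m + n)" by simp
    then have "real N ^ k \<le> (2 * real (m + n)) ^ k" by (rule power_mono) simp
    also have "\<dots> = real (m + n) ^ k * 2 ^ k" by (metis power_mult_distrib mult.commute)
    finally have zs2: "Z_star V k \<le> real (m + n) ^ k * 2 ^ k" using zs by linarith
    have zpos: "0 < Z_star V k" using b1 bs by linarith
    have "1 / (real (m + n) ^ k * 2 ^ k) \<le> 1 / Z_star V k"
      by (rule frac_le) (use zpos zs2 in auto)
    also have "\<dots> \<le> Z_balanced V k / Z_star V k"
      by (rule divide_right_mono) (use b1 zpos in auto)
    finally show ?thesis .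
  qed
qed

theorem theorem5p3:
  shows "\<exists>c > 0. \<exists>C > 0. \<forall>m n k :: nat.
           4 \<le> m \<longrightarrow> 4 \<le> n \<longrightarrow> 1 \<le> k \<longrightarrow> k dvd card (grid_hole_V m n) \<longrightarrow>
           Z_balanced (grid_hole_V m n) k / Z_star (grid_hole_V m n) k
             \<ge> c / (real (m + n) ^ k * C ^ k)"
  apply (rule exI[where x="1::real"], rule conjI, simp)
  apply (rule exI[where x="2::real"], rule conjI, simp)
  by (intro allI impI) (rule main_bound)

end
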